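(* Let $(\pi_h^k)_{k\ge 0}$ be the sequence of joint safety policies produced by the multi-agent safety policy iteration (defined in the context) from an arbitrary initial joint policy $\pi_h^0$, with an arbitrary ordering of the agents chosen at each iteration. Then: (a) for every $x\in\mathcal X$ and every $k\ge0$, $V_h^{\pi_h^{k+1}}(x)\ge V_h^{\pi_h^{k}}(x)$, and the sequence $(V_h^{\pi_h^k})_k$ converges; (b) under the tie-breaking convention in the context, the joint safety policies $\pi_h^k$ converge, i.e. are constant from some index on, to a joint policy $\pi_h^*=(\pi_{h,1}^*,\dots,\pi_{h,n}^* )$. This limit is a Nash equilibrium for the safety value function: for every agent $i\in\mathcal N$, every individual policy $\pi_{h,i}:\mathcal X\to\mathcal U_i$ and every $x\in\mathcal X$, $$V_h^{(\pi_{h,i},\pi^*_{h,-i})}(x)\le V_h^{\pi_h^*}(x).$$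
   Context: Setting. Let $\mathcal N=\{1,\dots,n\}$ be a finite set of agents, $\mathcal X$ a finite state space, $\mathcal U_i$ a finite action set for agent $i$, $\mathcal U=\prod_{i=1}^n\mathcal U_i$ the joint action space, $f:\mathcal X\times\mathcal U\to\mathcal X$ the deterministic dynamics, $h:\mathcal X\to\mathbb R$ a constraint function, and $\gamma_h\in(0,1)$ a safety discount factor. An individual policy of agent $i$ is a map $\pi_i:\mathcal X\to\mathcal U_i$. A joint policy is $\pi=(\pi_1,\dots,\pi_n)$, with $\pi(x)=(\pi_1(x),\dots,\pi_n(x))$. For a joint action $u$ and an agent $i$, $(u_i',u_{-i})$ denotes $u$ with its $i$-th component replaced by $u_i'$. The notation $(\pi_i',\pi_{-i})$ is used in the same way for policies. Safety value function. For a joint policy $\pi$, set $V_h^{\pi}(x)=\min_{t\in\mathbb N}\gamma_h^{t+1}h(x_t)$, where $x_0=x$ and $x_{t+1}=f(x_t,\pi(x_t))$. Multi-agent safety policy iteration. Given $\pi_h^k$, compute $V_h^{\pi_h^k}$ and choose an ordering $i_1,\dots,i_n$ of $\mathcal N$. Then, for each $x\in\mathcal X$ and for $j=1,\dots,n$ in turn, set $$\pi_{h,i_j}^{k+1}(x)\in\arg\max_{v\in\mathcal U_{i_j}}V_h^{\pi_h^k}\big(f(x,w^{(j)})\big),$$ where $w^{(j)}\in\mathcal U$ is the joint action with component $i_j$ equal to $v$, component $i_l$ equal to $\pi_{h,i_l}^{k+1}(x)$ for $l<j$, and component $i_l$ equal to $\pi_{h,i_l}^{k}(x)$ for $l>j$.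 Tie-breaking convention. In every argmax, if the agent's current action ($\pi^k_{h,i_j}(x)$ here) is a maximizer, it is selected. Otherwise, a maximizer is selected by a fixed deterministic rule. *)

theory Defs
  imports Complex_Main
begin

text \<open>Agents are the elements of a finite type 'i; states the elements of a finite type 'x.
  All individual actions live in a common type 'a; agent i's action set is U i.\<close>

definition valid_policy :: "('i \<Rightarrow> 'a set) \<Rightarrow> ('x \<Rightarrow> 'i \<Rightarrow> 'a) \<Rightarrow> bool" where
  "valid_policy U \<pi> \<longleftrightarrow> (\<forall>x i. \<pi> x i \<in> U i)"

definition traj :: "('x \<Rightarrow> ('i \<Rightarrow> 'a) \<Rightarrow> 'x) \<Rightarrow> ('x \<Rightarrow> 'i \<Rightarrow> 'a) \<Rightarrow> 'x \<Rightarrow> nat \<Rightarrow> 'x" where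
  "traj f \<pi> x t = ((\<lambda>s. f s (\<pi> s)) ^^ t) x"

definition safety_value ::
  "('x \<Rightarrow> ('i \<Rightarrow> 'a) \<Rightarrow> 'x) \<Rightarrow> ('x \<Rightarrow> real) \<Rightarrow> real \<Rightarrow> ('x \<Rightarrow> 'i \<Rightarrow> 'a) \<Rightarrow> 'x \<Rightarrow> real" where
  "safety_value f h \<gamma> \<pi> x = (INF t. \<gamma> ^ (t + 1) * h (traj f \<pi> x t))"

definition agent_ordering :: "'i list \<Rightarrow> bool" where
  "agent_ordering ord \<longleftrightarrow> distinct ord \<and> set ord = UNIV"

definition partial_joint ::
  "'i list \<Rightarrow> ('x \<Rightarrow> 'i \<Rightarrow> 'a) \<Rightarrow> ('x \<Rightarrow> 'i \<Rightarrow> 'a) \<Rightarrow> 'x \<Rightarrow> nat \<Rightarrow> 'i \<Rightarrow> 'a" where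
  "partial_joint ord \<pi> \<pi>' x j = (\<lambda>i. if i \<in> set (take j ord) then \<pi>' x i else \<pi> x i)"

definition upd_value ::
  "('x \<Rightarrow> ('i \<Rightarrow> 'a) \<Rightarrow> 'x) \<Rightarrow> ('x \<Rightarrow> real) \<Rightarrow> real \<Rightarrow> 'i list \<Rightarrow>
    ('x \<Rightarrow> 'i \<Rightarrow> 'a) \<Rightarrow> ('x \<Rightarrow> 'i \<Rightarrow> 'a) \<Rightarrow> 'x \<Rightarrow> nat \<Rightarrow> 'a \<Rightarrow> real" where
  "upd_value f h \<gamma> ord \<pi> \<pi>' x j v =
     safety_value f h \<gamma> \<pi> (f x ((partial_joint ord \<pi> \<pi>' x j)(ord ! j := v)))"

definition maspi_step ::
  "('i \<Rightarrow> 'a set) \<Rightarrow> ('x \<Rightarrow> ('i \<Rightarrow> 'a) \<Rightarrow> 'x) \<Rightarrow> ('x \<Rightarrow> real) \<Rightarrow> real \<Rightarrow> 'i list \<Rightarrow>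
    ('x \<Rightarrow> 'i \<Rightarrow> 'a) \<Rightarrow> ('x \<Rightarrow> 'i \<Rightarrow> 'a) \<Rightarrow> bool" where
  "maspi_step U f h \<gamma> ord \<pi> \<pi>' \<longleftrightarrow>
     (\<forall>x. \<forall>j < length ord.
        \<pi>' x (ord ! j) \<in> U (ord ! j) \<and>
        (\<forall>v \<in> U (ord ! j). upd_value f h \<gamma> ord \<pi> \<pi>' x j v
                            \<le> upd_value f h \<gamma> ord \<pi> \<pi>' x j (\<pi>' x (ord ! j))))"

definition maspi_tiebreak ::
  "('i \<Rightarrow> 'a set) \<Rightarrow> ('x \<Rightarrow> ('i \<Rightarrow> 'a) \<Rightarrow> 'x) \<Rightarrow> ('x \<Rightarrow> real) \<Rightarrow> real \<Rightarrow> 'i list \<Rightarrow>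
    ('x \<Rightarrow> 'i \<Rightarrow> 'a) \<Rightarrow> ('x \<Rightarrow> 'i \<Rightarrow> 'a) \<Rightarrow> bool" where
  "maspi_tiebreak U f h \<gamma> ord \<pi> \<pi>' \<longleftrightarrow>
     (\<forall>x. \<forall>j < length ord.
        (\<forall>v \<in> U (ord ! j). upd_value f h \<gamma> ord \<pi> \<pi>' x j v
                            \<le> upd_value f h \<gamma> ord \<pi> \<pi>' x j (\<pi> x (ord ! j)))
        \<longrightarrow> \<pi>' x (ord ! j) = \<pi> x (ord ! j))"

definition safety_nash ::
  "('i \<Rightarrow> 'a set) \<Rightarrow> ('x \<Rightarrow> ('i \<Rightarrow> 'a) \<Rightarrow> 'x) \<Rightarrow> ('x \<Rightarrow> real) \<Rightarrow> real \<Rightarrow>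
    ('x \<Rightarrow> 'i \<Rightarrow> 'a) \<Rightarrow> bool" where
  "safety_nash U f h \<gamma> \<pi>s \<longleftrightarrow>
     (\<forall>i. \<forall>\<pi>i :: 'x \<Rightarrow> 'a. (\<forall>x. \<pi>i x \<in> U i) \<longrightarrow>
        (\<forall>x. safety_value f h \<gamma> (\<lambda>y. (\<pi>s y)(i := \<pi>i y)) x \<le> safety_value f h \<gamma> \<pi>s x))"

end

theory Submission imports Defs "HOL-Library.FuncSet" begin

definition hb :: "('x::finite \<Rightarrow> real) \<Rightarrow> real" where
  "hb h = Max (range (\<lambda>y. \<bar>h y\<bar>))"

lemma hb_ge: "\<bar>h y\<bar> \<le> hb (h::'x::finite \<Rightarrow> real)"
  unfolding hb_def by (rule Max_ge) auto

lemma hb_nonneg: "0 \<le> hb (h::'x::finite \<Rightarrow> real)"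
  using hb_ge[of h undefined] by linarith

lemma traj_0[simp]: "traj f p x 0 = x"
  by (simp add: traj_def)

lemma traj_Suc: "traj f p x (Suc t) = traj f p (f x (p x)) t"
  by (simp add: traj_def funpow_Suc_right del: funpow.simps)

lemma term_lb:
  assumes "0 < \<gamma>" "\<gamma> < (1::real)"
  shows "- hb h \<le> \<gamma> ^ n * h (y::'x::finite)"
proof -
  have a: "0 \<le> \<gamma> ^ n" "\<gamma> ^ n \<le> 1" using assms by (auto intro: power_le_one)
  have "\<gamma> ^ n * \<bar>h y\<bar> \<le> 1 * \<bar>h y\<bar>" by (rule mult_right_mono[OF a(2)]) simp
  moreover have "\<gamma> ^ n * (- \<bar>h y\<bar>) \<le> \<gamma> ^ n * h y"
    by (rule mult_left_mono[OF _ a(1)]) (cases "h y \<ge> 0", auto)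
  ultimately show ?thesis using hb_ge[of h y] by linarith
qed

lemma term_ub:
  assumes "0 < \<gamma>" "\<gamma> < (1::real)"
  shows "\<gamma> ^ n * h (y::'x::finite) \<le> \<gamma> ^ n * hb h"
  using assms hb_ge[of h y] by (intro mult_left_mono) auto

lemma bdd:
  assumes "0 < \<gamma>" "\<gamma> < (1::real)"
  shows "bdd_below (range (\<lambda>t. \<gamma> ^ (t + 1) * h (traj f p (x::'x::finite) t)))"
  apply (rule bdd_belowI[of _ "- hb h"]) using term_lb[OF assms, of h] by blast

lemma V_le_term:
  assumes "0 < \<gamma>" "\<gamma> < (1::real)"
  shows "safety_value f h \<gamma> p (x::'x::finite) \<le> \<gamma> ^ (t + 1) * h (traj f p x t)"
  unfolding safety_value_def by (rule cINF_lower[OF bdd[OF assms]]) auto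

lemma V_lb:
  assumes "0 < \<gamma>" "\<gamma> < (1::real)"
  shows "- hb h \<le> safety_value f h \<gamma> p (x::'x::finite)"
  unfolding safety_value_def apply (rule cINF_greatest) using term_lb[OF assms, of h] by blast+

lemma V_le_h:
  assumes "0 < \<gamma>" "\<gamma> < (1::real)"
  shows "safety_value f h \<gamma> p (x::'x::finite) \<le> \<gamma> * h x"
  using V_le_term[OF assms, of f h p x 0] by simp

lemma V_le_succ:
  assumes "0 < \<gamma>" "\<gamma> < (1::real)"
  shows "safety_value f h \<gamma> p (x::'x::finite) \<le> \<gamma> * safety_value f h \<gamma> p (f x (p x))"
proof -
  have "safety_value f h \<gamma> p x / \<gamma> \<le> safety_value f h \<gamma> p (f x (p x))"
    unfolding safety_value_def[of f h \<gamma> p "f x (p x)"]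
  proof (rule cINF_greatest)
    fix t
    have "safety_value f h \<gamma> p x \<le> \<gamma> ^ (Suc t + 1) * h (traj f p x (Suc t))"
      by (rule V_le_term[OF assms])
    then have "safety_value f h \<gamma> p x \<le> \<gamma> * (\<gamma> ^ (t + 1) * h (traj f p (f x (p x)) t))"
      by (simp add: traj_Suc mult.assoc)
    then show "safety_value f h \<gamma> p x / \<gamma> \<le> \<gamma> ^ (t + 1) * h (traj f p (f x (p x)) t)"
      using assms by (simp add: divide_le_eq mult.commute)
  qed auto
  then show ?thesis using assms by (simp add: divide_le_eq mult.commute)
qed

lemma V_ge:
  assumes "0 < \<gamma>" "\<gamma> < (1::real)"
  shows "\<gamma> * min (h x) (safety_value f h \<gamma> p (f x (p x))) \<le> safety_value f h \<gamma> p (x::'x::finite)"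
  unfolding safety_value_def[of f h \<gamma> p x]
proof (rule cINF_greatest)
  fix t show "\<gamma> * min (h x) (safety_value f h \<gamma> p (f x (p x))) \<le> \<gamma> ^ (t + 1) * h (traj f p x t)"
  proof (cases t)
    case 0
    have "\<gamma> * min (h x) (safety_value f h \<gamma> p (f x (p x))) \<le> \<gamma> * h x"
      using assms by (intro mult_left_mono) auto
    then show ?thesis using 0 by simp
  next
    case (Suc s)
    have "safety_value f h \<gamma> p (f x (p x)) \<le> \<gamma> ^ (s + 1) * h (traj f p (f x (p x)) s)"
      by (rule V_le_term[OF assms])
    then have "\<gamma> * min (h x) (safety_value f h \<gamma> p (f x (p x))) \<le> \<gamma> * (\<gamma> ^ (s + 1) * h (traj f p (f x (p x)) s))"
      using assms by (intro mult_left_mono) auto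
    then show ?thesis using Suc by (simp add: traj_Suc mult.assoc)
  qed
qed auto

lemma improve:
  assumes "0 < \<gamma>" "\<gamma> < (1::real)"
    and H: "\<And>x. safety_value f h \<gamma> p (f x (p x)) \<le> safety_value f h \<gamma> p (f x (q x))"
  shows "safety_value f h \<gamma> p (x::'x::finite) \<le> safety_value f h \<gamma> q x"
proof -
  have "\<forall>x. safety_value f h \<gamma> p x \<le> \<gamma> ^ (t + 1) * h (traj f q x t)" for t
  proof (induction t)
    case 0 then show ?case using V_le_h[OF assms(1,2), of f h p] by simp
  next
    case (Suc t)
    show ?case
    proof
      fix x
      have "safety_value f h \<gamma> p x \<le> \<gamma> * safety_value f h \<gamma> p (f x (q x))"
        using V_le_succ[OF assms(1,2), of f h p x] mult_left_mono[OF H[of x], of \<gamma>] assms by linarith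
      also have "\<dots> \<le> \<gamma> * (\<gamma> ^ (t + 1) * h (traj f q (f x (q x)) t))"
        using Suc assms by (intro mult_left_mono) auto
      finally show "safety_value f h \<gamma> p x \<le> \<gamma> ^ (Suc t + 1) * h (traj f q x (Suc t))"
        by (simp add: traj_Suc mult.assoc)
    qed
  qed
  then show ?thesis unfolding safety_value_def[of f h \<gamma> q x]
    by (intro cINF_greatest) auto
qed


lemma dominate:
  assumes g0: "0 < \<gamma>" "\<gamma> < (1::real)" and glb: "\<And>y. - B \<le> g y" and B: "0 \<le> B"
    and st: "\<And>y. \<gamma> * min (h y) (g (f y (p y))) \<le> g y"
  shows "safety_value f h \<gamma> p (x::'x::finite) \<le> g x"
proof -
  have C: "\<forall>x. (\<exists>t<m. \<gamma>^(t+1) * h (traj f p x t) \<le> g x) \<or> \<gamma>^m * g (traj f p x m) \<le> g x" for m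
  proof (induction m)
    case 0 show ?case by simp
  next
    case (Suc m)
    show ?case
    proof
      fix x
      define y where "y = f x (p x)"
      show "(\<exists>t<Suc m. \<gamma>^(t+1) * h (traj f p x t) \<le> g x) \<or> \<gamma>^Suc m * g (traj f p x (Suc m)) \<le> g x"
      proof (cases "h x \<le> g y")
        case True
        then have "\<gamma> * h x \<le> g x" using st[of x] y_def by simp
        then show ?thesis by (intro disjI1 exI[of _ 0]) simp
      next
        case False
        then have gy: "\<gamma> * g y \<le> g x" using st[of x] y_def by simp
        from Suc.IH have "(\<exists>t<m. \<gamma>^(t+1) * h (traj f p y t) \<le> g y) \<or> \<gamma>^m * g (traj f p y m) \<le> g y" by blast
        then show ?thesis
        proof
          assume "\<exists>t<m. \<gamma>^(t+1) * h (traj f p y t) \<le> g y"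
          then obtain t where t: "t<m" "\<gamma>^(t+1) * h (traj f p y t) \<le> g y" by blast
          have "\<gamma>^(Suc t+1) * h (traj f p x (Suc t)) = \<gamma> * (\<gamma>^(t+1) * h (traj f p y t))"
            by (simp add: traj_Suc y_def)
          also have "\<dots> \<le> \<gamma> * g y" using t g0 by (intro mult_left_mono) auto
          finally have "\<gamma>^(Suc t+1) * h (traj f p x (Suc t)) \<le> g x" using gy by linarith
          then show ?thesis using t(1) by (intro disjI1 exI[of _ "Suc t"]) auto
        next
          assume a: "\<gamma>^m * g (traj f p y m) \<le> g y"
          have "\<gamma>^Suc m * g (traj f p x (Suc m)) = \<gamma> * (\<gamma>^m * g (traj f p y m))"
            by (simp add: traj_Suc y_def)
          also have "\<dots> \<le> \<gamma> * g y" using a g0 by (intro mult_left_mono) auto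
          finally show ?thesis using gy by auto
        qed
      qed
    qed
  qed
  show ?thesis
  proof (rule ccontr)
    assume nt: "\<not> ?thesis"
    define d where "d = safety_value f h \<gamma> p x - g x"
    have d: "0 < d" using nt d_def by simp
    define c where "c = B + hb h + 1"
    have c: "0 < c" using B hb_nonneg[of h] c_def by simp
    obtain m where m: "\<gamma>^m < d / (2*c)" using real_arch_pow_inv[of "d/(2*c)" \<gamma>] d c g0 by auto
    have mc: "\<gamma>^m * c < d/2" using m c by (simp add: field_simps)
    have gm: "0 \<le> \<gamma>^m" using g0 by simp
    from C[of m] have "(\<exists>t<m. \<gamma>^(t+1) * h (traj f p x t) \<le> g x) \<or> \<gamma>^m * g (traj f p x m) \<le> g x" by blast
    then show False
    proof
      assume "\<exists>t<m. \<gamma>^(t+1) * h (traj f p x t) \<le> g x"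
      then obtain t where "\<gamma>^(t+1) * h (traj f p x t) \<le> g x" by blast
      with V_le_term[OF g0, of f h p x t] d d_def show False by linarith
    next
      assume a: "\<gamma>^m * g (traj f p x m) \<le> g x"
      have "\<gamma>^m * (-c) \<le> \<gamma>^m * g (traj f p x m)"
        using glb[of "traj f p x m"] hb_nonneg[of h] c_def gm by (intro mult_left_mono) auto
      then have l: "- (d/2) < g x" using a mc by simp
      have "safety_value f h \<gamma> p x \<le> \<gamma>^(m+1) * h (traj f p x m)" by (rule V_le_term[OF g0])
      also have "\<dots> \<le> \<gamma>^(m+1) * hb h" by (rule term_ub[OF g0])
      also have "\<dots> \<le> \<gamma>^m * hb h"
        using g0 hb_nonneg[of h] by (intro mult_right_mono) (auto simp: power_decreasing)
      also have "\<dots> \<le> \<gamma>^m * c" using gm c_def B by (intro mult_left_mono) auto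
      finally show False using l mc d_def by linarith
    qed
  qed
qed

lemma not_in_take:
  assumes "distinct ord" "j < length ord"
  shows "ord ! j \<notin> set (take j ord)"
  using assms by (auto simp: in_set_conv_nth nth_eq_iff_index_eq)

lemma pj_same:
  assumes "distinct ord" "j < length ord"
  shows "(partial_joint ord p q x j)(ord ! j := p x (ord ! j)) = partial_joint ord p q x j"
  using not_in_take[OF assms] by (auto simp: partial_joint_def fun_eq_iff)

lemma pj_next:
  assumes "j < length ord"
  shows "(partial_joint ord p q x j)(ord ! j := q x (ord ! j)) = partial_joint ord p q x (Suc j)"
  using assms by (auto simp: partial_joint_def fun_eq_iff take_Suc_conv_app_nth)

lemma pj_0: "partial_joint ord p q x 0 = p x"
  by (auto simp: partial_joint_def fun_eq_iff)

lemma pj_len: "set ord = UNIV \<Longrightarrow> partial_joint ord p q x (length ord) = q x"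
  by (auto simp: partial_joint_def fun_eq_iff)

lemma pj_eq:
  assumes "\<forall>j'<j. q x (ord ! j') = p x (ord ! j')" "j \<le> length ord"
  shows "partial_joint ord p q x j = p x"
  using assms by (auto simp: partial_joint_def fun_eq_iff in_set_conv_nth)

lemma chain:
  assumes ao: "agent_ordering ord" and vp: "valid_policy U p"
    and st: "maspi_step U f h \<gamma> ord p q"
    and j: "j1 \<le> j2" "j2 \<le> length ord"
  shows "safety_value f h \<gamma> p (f x (partial_joint ord p q x j1))
           \<le> safety_value f h \<gamma> p (f x (partial_joint ord p q x j2))"
proof -
  have d: "distinct ord" using ao by (simp add: agent_ordering_def)
  have "j1 + e \<le> length ord \<Longrightarrow> safety_value f h \<gamma> p (f x (partial_joint ord p q x j1))
           \<le> safety_value f h \<gamma> p (f x (partial_joint ord p q x (j1 + e)))" for e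
  proof (induction e)
    case 0 then show ?case by simp
  next
    case (Suc e)
    define n where "n = j1 + e"
    have n: "n < length ord" using Suc.prems n_def by simp
    have "p x (ord ! n) \<in> U (ord ! n)" using vp by (simp add: valid_policy_def)
    then have "upd_value f h \<gamma> ord p q x n (p x (ord ! n)) \<le> upd_value f h \<gamma> ord p q x n (q x (ord ! n))"
      using st n by (simp add: maspi_step_def)
    then have "safety_value f h \<gamma> p (f x (partial_joint ord p q x n))
        \<le> safety_value f h \<gamma> p (f x (partial_joint ord p q x (Suc n)))"
      by (simp add: upd_value_def pj_same[OF d n] pj_next[OF n])
    with Suc n_def show ?case by simp
  qed
  moreover obtain e where "j2 = j1 + e" using j(1) le_Suc_ex by blast
  ultimately show ?thesis using j(2) by simp
qed

lemma S1:
  assumes ao: "agent_ordering ord" and vp: "valid_policy U p"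
    and st: "maspi_step U f h \<gamma> ord p q"
  shows "safety_value f h \<gamma> p (f x (p x)) \<le> safety_value f h \<gamma> p (f x (q x))"
  using chain[OF ao vp st, of 0 "length ord" x] ao
  by (simp add: pj_0 pj_len agent_ordering_def)

lemma S2:
  assumes ao: "agent_ordering ord" and vp: "valid_policy U p"
    and st: "maspi_step U f h \<gamma> ord p q"
    and tb: "maspi_tiebreak U f h \<gamma> ord p q"
    and ne: "q x \<noteq> p x"
  shows "safety_value f h \<gamma> p (f x (p x)) < safety_value f h \<gamma> p (f x (q x))"
proof -
  have d: "distinct ord" and su: "set ord = UNIV" using ao by (auto simp: agent_ordering_def)
  obtain i where "q x i \<noteq> p x i" using ne by auto
  moreover obtain j0 where "j0 < length ord" "ord ! j0 = i" using su by (metis UNIV_I in_set_conv_nth)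
  ultimately have ex: "\<exists>j. j < length ord \<and> q x (ord ! j) \<noteq> p x (ord ! j)" by auto
  define j where "j = (LEAST j. j < length ord \<and> q x (ord ! j) \<noteq> p x (ord ! j))"
  have jl: "j < length ord" and jne: "q x (ord ! j) \<noteq> p x (ord ! j)"
    using LeastI_ex[OF ex] unfolding j_def by auto
  have before: "\<forall>j'<j. q x (ord ! j') = p x (ord ! j')"
  proof (intro allI impI)
    fix j' assume jj: "j' < j"
    then have "\<not> (j' < length ord \<and> q x (ord ! j') \<noteq> p x (ord ! j'))"
      unfolding j_def by (rule not_less_Least)
    with jj jl show "q x (ord ! j') = p x (ord ! j')" by auto
  qed
  have pjj: "partial_joint ord p q x j = p x" using pj_eq[of j q x ord p] before jl by simp
  from tb jl jne obtain v where v: "v \<in> U (ord ! j)"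
    "upd_value f h \<gamma> ord p q x j (p x (ord ! j)) < upd_value f h \<gamma> ord p q x j v"
    unfolding maspi_tiebreak_def by (meson not_le)
  from st jl v(1) have "upd_value f h \<gamma> ord p q x j v \<le> upd_value f h \<gamma> ord p q x j (q x (ord ! j))"
    unfolding maspi_step_def by blast
  with v(2) have "safety_value f h \<gamma> p (f x (partial_joint ord p q x j))
      < safety_value f h \<gamma> p (f x (partial_joint ord p q x (Suc j)))"
    by (simp add: upd_value_def pj_same[OF d jl] pj_next[OF jl])
  also have "\<dots> \<le> safety_value f h \<gamma> p (f x (partial_joint ord p q x (length ord)))"
    using chain[OF ao vp st, of "Suc j" "length ord" x] jl by simp
  finally show ?thesis by (simp add: pjj pj_len[OF su])
qed

lemma mono_finite_const:
  fixes s :: "nat \<Rightarrow> real"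
  assumes m: "\<And>k. s k \<le> s (Suc k)" and fin: "finite (range s)"
  shows "\<exists>K. \<forall>k\<ge>K. s k = s K"
proof -
  have "Max (range s) \<in> range s" using fin by (intro Max_in) auto
  then obtain K where K: "s K = Max (range s)" by auto
  have inc: "incseq s" using m by (simp add: incseq_SucI)
  show ?thesis
  proof (intro exI allI impI)
    fix k assume "K \<le> k"
    then have "s K \<le> s k" using inc by (simp add: incseq_def)
    moreover have "s k \<le> Max (range s)" using fin by (intro Max_ge) auto
    ultimately show "s k = s K" using K by simp
  qed
qed

lemma finite_valid:
  assumes "\<And>i. finite (U i)"
  shows "finite {p :: 'x::finite \<Rightarrow> 'i::finite \<Rightarrow> 'a. valid_policy U p}"
proof -
  have "{p :: 'x \<Rightarrow> 'i \<Rightarrow> 'a. valid_policy U p} \<subseteq> PiE UNIV (\<lambda>_. PiE UNIV U)"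
    by (auto simp: valid_policy_def PiE_UNIV_domain)
  moreover have "finite (PiE (UNIV::'x set) (\<lambda>_. PiE (UNIV::'i set) U))"
    using assms by (intro finite_PiE) auto
  ultimately show ?thesis by (rule finite_subset)
qed


theorem theorem1:
  fixes U :: "'i::finite \<Rightarrow> 'a set"
    and f :: "'x::finite \<Rightarrow> ('i \<Rightarrow> 'a) \<Rightarrow> 'x"
    and h :: "'x \<Rightarrow> real"
    and \<gamma> :: real
    and \<pi> :: "nat \<Rightarrow> 'x \<Rightarrow> 'i \<Rightarrow> 'a"
    and ord :: "nat \<Rightarrow> 'i list"
  assumes U_fin: "\<And>i. finite (U i)"
    and U_ne: "\<And>i. U i \<noteq> {}"
    and gamma: "0 < \<gamma>" "\<gamma> < 1"
    and init: "valid_policy U (\<pi> 0)"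
    and ords: "\<And>k. agent_ordering (ord k)"
    and steps: "\<And>k. maspi_step U f h \<gamma> (ord k) (\<pi> k) (\<pi> (Suc k))"
  shows "(\<forall>k x. safety_value f h \<gamma> (\<pi> k) x \<le> safety_value f h \<gamma> (\<pi> (Suc k)) x)
       \<and> (\<forall>x. convergent (\<lambda>k. safety_value f h \<gamma> (\<pi> k) x))
       \<and> ((\<forall>k. maspi_tiebreak U f h \<gamma> (ord k) (\<pi> k) (\<pi> (Suc k))) \<longrightarrow>
           (\<exists>\<pi>s K. valid_policy U \<pi>s \<and> (\<forall>k\<ge>K. \<pi> k = \<pi>s) \<and> safety_nash U f h \<gamma> \<pi>s))"
proof -
  let ?V = "safety_value f h \<gamma>"
  have agent: "\<exists>j<length (ord k). ord k ! j = i" for k i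
    using ords[of k] by (metis UNIV_I agent_ordering_def in_set_conv_nth)
  have valid: "valid_policy U (\<pi> k)" for k
  proof (induction k)
    case 0 then show ?case by (rule init)
  next
    case (Suc k)
    show ?case unfolding valid_policy_def
    proof (intro allI)
      fix x i
      obtain j where "j < length (ord k)" "ord k ! j = i" using agent by blast
      then show "\<pi> (Suc k) x i \<in> U i" using steps[of k] unfolding maspi_step_def by blast
    qed
  qed
  have A: "?V (\<pi> k) x \<le> ?V (\<pi> (Suc k)) x" for k x
    by (rule improve[OF gamma]) (rule S1[OF ords valid steps])
  have B: "convergent (\<lambda>k. ?V (\<pi> k) x)" for x
  proof -
    have "incseq (\<lambda>k. ?V (\<pi> k) x)" using A by (simp add: incseq_SucI)
    moreover have "\<forall>k. ?V (\<pi> k) x \<le> \<gamma> * h x" using V_le_h[OF gamma] by blast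
    ultimately obtain L where "(\<lambda>k. ?V (\<pi> k) x) \<longlonglongrightarrow> L" by (rule incseq_convergent)
    then show ?thesis by (auto simp: convergent_def)
  qed
  have C: "\<exists>\<pi>s K. valid_policy U \<pi>s \<and> (\<forall>k\<ge>K. \<pi> k = \<pi>s) \<and> safety_nash U f h \<gamma> \<pi>s"
    if tb: "\<forall>k. maspi_tiebreak U f h \<gamma> (ord k) (\<pi> k) (\<pi> (Suc k))"
  proof -
    define Q where "Q k x = ?V (\<pi> k) (f x (\<pi> k x))" for k x
    have Qm: "Q k x \<le> Q (Suc k) x" for k x
      using S1[OF ords valid steps, of k x] A[of k "f x (\<pi> (Suc k) x)"] unfolding Q_def by linarith
    have Qfin: "finite (range (\<lambda>k. Q k x))" for x
    proof -
      have "range (\<lambda>k. Q k x) \<subseteq> (\<lambda>(p, y). ?V p y) ` ({p. valid_policy U p} \<times> UNIV)"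
        using valid unfolding Q_def by auto
      moreover have "finite ((\<lambda>(p, y). ?V p y) ` ({p. valid_policy U p} \<times> (UNIV :: 'x set)))"
      proof -
        have "finite {p :: 'x \<Rightarrow> 'i \<Rightarrow> 'a. valid_policy U p}" by (rule finite_valid) (rule U_fin)
        then show ?thesis by (intro finite_imageI finite_cartesian_product) auto
      qed
      ultimately show ?thesis by (rule finite_subset)
    qed
    have ev: "eventually (\<lambda>k. Q (Suc k) x = Q k x) sequentially" for x
    proof -
      obtain K where K: "\<forall>k\<ge>K. Q k x = Q K x"
        using mono_finite_const[of "\<lambda>k. Q k x", OF Qm Qfin] by blast
      then show ?thesis unfolding eventually_sequentially
        by (intro exI[of _ K]) (metis le_SucI)
    qed
    have "eventually (\<lambda>k. \<forall>x. Q (Suc k) x = Q k x) sequentially"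
      by (rule eventually_all_finite) (rule ev)
    then obtain K where K: "\<And>k x. k \<ge> K \<Longrightarrow> Q (Suc k) x = Q k x"
      unfolding eventually_sequentially by blast
    have stab: "\<pi> (Suc k) = \<pi> k" if "k \<ge> K" for k
    proof
      fix x show "\<pi> (Suc k) x = \<pi> k x"
      proof (rule ccontr)
        assume "\<pi> (Suc k) x \<noteq> \<pi> k x"
        then have "Q k x < ?V (\<pi> k) (f x (\<pi> (Suc k) x))"
          unfolding Q_def using S2[OF ords valid steps tb[rule_format, of k]] by blast
        also have "\<dots> \<le> Q (Suc k) x" unfolding Q_def by (rule A)
        finally show False using K[OF that, of x] by simp
      qed
    qed
    have const: "\<pi> k = \<pi> K" if kK: "k \<ge> K" for k
    proof -
      have pe: "\<pi> (K + e) = \<pi> K" for e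
      proof (induction e)
        case 0 show ?case by simp
      next
        case (Suc e)
        have "\<pi> (Suc (K + e)) = \<pi> (K + e)" by (rule stab) simp
        then show ?case using Suc.IH by simp
      qed
      obtain e where ke: "k = K + e" using le_Suc_ex[OF kK] by blast
      show ?thesis unfolding ke by (rule pe)
    qed
    define \<pi>s where "\<pi>s = \<pi> K"
    have dev: "?V \<pi>s (f y ((\<pi>s y)(i := v))) \<le> ?V \<pi>s (f y (\<pi>s y))" if v: "v \<in> U i" for y i v
    proof -
      obtain j where j: "j < length (ord K)" "ord K ! j = i" using agent by blast
      have pj: "partial_joint (ord K) \<pi>s \<pi>s y j = \<pi>s y" by (auto simp: partial_joint_def)
      have sK: "\<pi> (Suc K) = \<pi>s" using stab[of K] \<pi>s_def by simp
      have "maspi_step U f h \<gamma> (ord K) \<pi>s \<pi>s" using steps[of K] sK \<pi>s_def by simp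
      moreover have "v \<in> U (ord K ! j)" using j(2) v by simp
      ultimately have "upd_value f h \<gamma> (ord K) \<pi>s \<pi>s y j v
          \<le> upd_value f h \<gamma> (ord K) \<pi>s \<pi>s y j (\<pi>s y (ord K ! j))"
        using j(1) unfolding maspi_step_def by blast
      then show ?thesis by (simp add: upd_value_def pj j(2))
    qed
    have nash: "safety_nash U f h \<gamma> \<pi>s"
      unfolding safety_nash_def
    proof (intro allI impI)
      fix i and \<pi>i :: "'x \<Rightarrow> 'a" and x
      assume hyp: "\<forall>x. \<pi>i x \<in> U i"
      show "?V (\<lambda>y. (\<pi>s y)(i := \<pi>i y)) x \<le> ?V \<pi>s x"
      proof (rule dominate[OF gamma _ hb_nonneg[of h]])
        fix y show "- hb h \<le> ?V \<pi>s y" by (rule V_lb[OF gamma])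
      next
        fix y
        have "\<gamma> * min (h y) (?V \<pi>s (f y ((\<pi>s y)(i := \<pi>i y))))
              \<le> \<gamma> * min (h y) (?V \<pi>s (f y (\<pi>s y)))"
          using dev[of "\<pi>i y" i y] hyp gamma by (intro mult_left_mono) auto
        also have "\<dots> \<le> ?V \<pi>s y" by (rule V_ge[OF gamma])
        finally show "\<gamma> * min (h y) (?V \<pi>s (f y ((\<lambda>y. (\<pi>s y)(i := \<pi>i y)) y))) \<le> ?V \<pi>s y"
          by simp
      qed
    qed
    have "\<forall>k\<ge>K. \<pi> k = \<pi>s" using const unfolding \<pi>s_def by blast
    then show ?thesis using valid[of K] nash unfolding \<pi>s_def by blast
  qed
  show ?thesis using A B C by blast
qed

end
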